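(* Let $G(n,p)$ be an Erdős–Rényi random graph on $n$ vertices with $np\to\infty$. Assume the strong external infection regime $0<\kappa<\frac{1}{4(n-1)^2}$, $a>1-\frac{1}{n^\alpha}>1-\kappa>\frac12$ for some $\alpha>1$, and additionally $\lambda\le\frac{1}{n^{1+\alpha}p}$. Let $t^{(n)}_{\mathrm{mix}}(\epsilon)$ be the mixing time of the noisy SIS model run on the realized graph $G(n,p)$. Then for every fixed $\epsilon\in(0,1)$ there is a sequence $\delta_n\to0$ such that for every $\epsilon'>0$ and all $n$ large enough, $$\mathbf{P}\Big(\tfrac{n}{2}\log n\,(1-\delta_n)\le t^{(n)}_{\mathrm{mix}}(\epsilon)\le 2n\log n\,(1+\delta_n)\Big)\ge1-\epsilon',$$ where $\mathbf{P}$ is the law of the random graph.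
   Context: Let $G_n=(V_n,E_n)$ be a finite graph with $|V_n|=n$, and let $\Delta^{(n)}_{\max}=\max_{x\in V_n}\deg(x)$. The state space is $\Omega_n=\{0,1\}^{V_n}$. For $\sigma\in\Omega_n$, $x\in V_n$, let $n_{I,\sigma}(x)=\#\{y\in V_n: y\sim x,\ \sigma_y=1\}$. Fix parameters $a,\lambda,\kappa>0$ (which may depend on $n$), put $p(\sigma,x)=a+\lambda\, n_{I,\sigma}(x)$. The noisy SIS model on $G_n$ is the discrete-time Markov chain on $\Omega_n$ in which, at each step, a vertex $x$ is chosen uniformly at random and only its state may change: if $\sigma_x=0$ it becomes $1$ with probability $p(\sigma,x)$ and stays $0$ otherwise; if $\sigma_x=1$ it becomes $0$ with probability $\kappa$ and stays $1$ otherwise. It has unique stationary distribution $\mu^n_{a,\lambda,\kappa}$. With $\mu^n_{\eta_0,t}$ the law at time $t$ from $\eta_0$ and $d_{TV}$ total variation distance, $d^{(n)}(t)=\sup_{\eta_0}d_{TV}(\mu^n_{\eta_0,t},\mu^n_{a,\lambda,\kappa})$ and $t^{(n)}_{\mathrm{mix}}(\epsilon)=\inf\{t\ge0:d^{(n)}(t)\le\epsilon\}$. In $G(n,p)$ each unordered pair of distinct vertices is an edge independently with probability $p$. *)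

theory Defs
  imports Complex_Main
begin

text \<open>Vertices of G_n are 0,...,n-1. A graph is a set of edges, each edge a
2-element set {i,j} of vertices. A configuration sigma is the set of infected
vertices (those x with sigma_x = 1).\<close>

definition all_pairs :: "nat \<Rightarrow> nat set set" where
  "all_pairs n = {e. \<exists>i j. i < j \<and> j < n \<and> e = {i, j}}"

definition gnp_prob :: "nat \<Rightarrow> real \<Rightarrow> (nat set set \<Rightarrow> bool) \<Rightarrow> real" where
  "gnp_prob n p P =
     (\<Sum>E\<in>{E. E \<subseteq> all_pairs n \<and> P E}.
        p ^ card E * (1 - p) ^ (card (all_pairs n) - card E))"

definition states :: "nat \<Rightarrow> nat set set" where
  "states n = Pow {..<n}"

definition n_inf :: "nat set set \<Rightarrow> nat set \<Rightarrow> nat \<Rightarrow> nat" where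
  "n_inf E \<sigma> x = card {y \<in> \<sigma>. {x, y} \<in> E}"

definition site_step ::
  "nat set set \<Rightarrow> real \<Rightarrow> real \<Rightarrow> real \<Rightarrow> nat \<Rightarrow> nat set \<Rightarrow> nat set \<Rightarrow> real" where
  "site_step E a lam kap x \<sigma> \<tau> =
     (if x \<notin> \<sigma> then
        (let q = min 1 (a + lam * real (n_inf E \<sigma> x)) in
          if \<tau> = insert x \<sigma> then q else if \<tau> = \<sigma> then 1 - q else 0)
      else
        (if \<tau> = \<sigma> - {x} then kap else if \<tau> = \<sigma> then 1 - kap else 0))"

definition sis_kernel ::
  "nat \<Rightarrow> nat set set \<Rightarrow> real \<Rightarrow> real \<Rightarrow> real \<Rightarrow> nat set \<Rightarrow> nat set \<Rightarrow> real" where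
  "sis_kernel n E a lam kap \<sigma> \<tau> =
     (\<Sum>x<n. site_step E a lam kap x \<sigma> \<tau>) / real n"

fun sis_law ::
  "nat \<Rightarrow> nat set set \<Rightarrow> real \<Rightarrow> real \<Rightarrow> real \<Rightarrow> nat set \<Rightarrow> nat \<Rightarrow> nat set \<Rightarrow> real" where
  "sis_law n E a lam kap \<eta>0 0 = (\<lambda>\<tau>. if \<tau> = \<eta>0 then 1 else 0)"
| "sis_law n E a lam kap \<eta>0 (Suc t) =
     (\<lambda>\<tau>. \<Sum>\<sigma>\<in>states n. sis_law n E a lam kap \<eta>0 t \<sigma> * sis_kernel n E a lam kap \<sigma> \<tau>)"

definition is_stationary ::
  "nat \<Rightarrow> nat set set \<Rightarrow> real \<Rightarrow> real \<Rightarrow> real \<Rightarrow> (nat set \<Rightarrow> real) \<Rightarrow> bool" where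
  "is_stationary n E a lam kap \<mu> \<longleftrightarrow>
     (\<forall>\<sigma>. \<sigma> \<notin> states n \<longrightarrow> \<mu> \<sigma> = 0) \<and>
     (\<forall>\<sigma>\<in>states n. \<mu> \<sigma> \<ge> 0) \<and>
     (\<Sum>\<sigma>\<in>states n. \<mu> \<sigma>) = 1 \<and>
     (\<forall>\<tau>\<in>states n. \<mu> \<tau> = (\<Sum>\<sigma>\<in>states n. \<mu> \<sigma> * sis_kernel n E a lam kap \<sigma> \<tau>))"

definition sis_stat ::
  "nat \<Rightarrow> nat set set \<Rightarrow> real \<Rightarrow> real \<Rightarrow> real \<Rightarrow> nat set \<Rightarrow> real" where
  "sis_stat n E a lam kap = (THE \<mu>. is_stationary n E a lam kap \<mu>)"

definition tv_dist :: "nat \<Rightarrow> (nat set \<Rightarrow> real) \<Rightarrow> (nat set \<Rightarrow> real) \<Rightarrow> real" where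
  "tv_dist n \<nu> \<mu> = (\<Sum>\<sigma>\<in>states n. \<bar>\<nu> \<sigma> - \<mu> \<sigma>\<bar>) / 2"

definition sis_d :: "nat \<Rightarrow> nat set set \<Rightarrow> real \<Rightarrow> real \<Rightarrow> real \<Rightarrow> nat \<Rightarrow> real" where
  "sis_d n E a lam kap t =
     Max ((\<lambda>\<eta>0. tv_dist n (sis_law n E a lam kap \<eta>0 t) (sis_stat n E a lam kap)) ` states n)"

definition sis_tmix :: "nat \<Rightarrow> nat set set \<Rightarrow> real \<Rightarrow> real \<Rightarrow> real \<Rightarrow> real \<Rightarrow> nat" where
  "sis_tmix n E a lam kap \<epsilon> = (LEAST t. sis_d n E a lam kap t \<le> \<epsilon>)"

end

theory Submission
  imports Defs
begin


lemma site_step_sum: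
  assumes "finite A"
  shows "(\<Sum>\<tau>\<in>A. site_step E a lam kap x \<sigma> \<tau>) =
    (if x \<notin> \<sigma> then (if insert x \<sigma> \<in> A then min 1 (a + lam * real (n_inf E \<sigma> x)) else 0)
        + (if \<sigma> \<in> A then 1 - min 1 (a + lam * real (n_inf E \<sigma> x)) else 0)
     else (if \<sigma> - {x} \<in> A then kap else 0) + (if \<sigma> \<in> A then 1 - kap else 0))"
proof (cases "x \<in> \<sigma>")
  case True
  then have ne: "\<sigma> - {x} \<noteq> \<sigma>" by auto
  have "\<And>\<tau>. site_step E a lam kap x \<sigma> \<tau> = (if \<tau> = \<sigma> - {x} then kap else 0) + (if \<tau> = \<sigma> then 1 - kap else 0)"
    using True ne by (auto simp: site_step_def)
  then show ?thesis using True assms by (simp add: sum.distrib)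
next
  case False
  let ?q = "min 1 (a + lam * real (n_inf E \<sigma> x))"
  have ne: "insert x \<sigma> \<noteq> \<sigma>" using False by auto
  have "\<And>\<tau>. site_step E a lam kap x \<sigma> \<tau> = (if \<tau> = insert x \<sigma> then ?q else 0) + (if \<tau> = \<sigma> then 1 - ?q else 0)"
    using False ne by (auto simp: site_step_def Let_def)
  then show ?thesis using False assms by (simp add: sum.distrib)
qed


lemma pow_le_exp: fixes y :: real assumes "0 \<le> y" "y \<le> 1" shows "(1 - y) ^ n \<le> exp (- real n * y)"
proof -
  have "(1 - y) ^ n \<le> exp (- y) ^ n"
    using assms by (intro power_mono) (auto simp: exp_ge_add_one_self[of "-y", simplified])
  also have "\<dots> = exp (- real n * y)" by (simp add: exp_of_nat_mult[symmetric])
  finally show ?thesis .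
qed

lemma upper_analytic:
  assumes n: "n \<ge> (3::nat)" and t: "2 * real n * ln (real n) \<le> real t"
  shows "real n * (1 - 1 / real n) ^ t \<le> 1 / real n"
proof -
  have "(1 - 1 / real n) ^ t \<le> exp (- real t * (1 / real n))"
    using n by (intro pow_le_exp) auto
  also have "\<dots> \<le> exp (- 2 * ln (real n))"
    using n t by (auto simp: field_simps)
  also have "\<dots> = 1 / real n ^ 2"
  proof -
    have "exp (2 * ln (real n)) = exp (ln (real n)) ^ 2" using exp_of_nat_mult[of 2 "ln (real n)"] by simp
    then show ?thesis using n by (simp add: exp_minus inverse_eq_divide)
  qed
  finally have "real n * (1 - 1 / real n) ^ t \<le> real n * (1 / real n ^ 2)"
    using n by (intro mult_left_mono) auto
  also have "\<dots> = 1 / real n" using n by (simp add: power2_eq_square)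
  finally show ?thesis .
qed

lemma lower_analytic:
  assumes n: "n \<ge> (3::nat)" and t: "real t \<le> real n / 2 * ln (real n)"
  shows "(1 - (1 - 1 / real n) ^ t) ^ n \<le> exp (- sqrt (real n) / exp 1)"
proof -
  define x where "x = 1 / real n"
  have x0: "0 \<le> x" "x \<le> 1/2" using n by (auto simp: x_def field_simps)
  have x1: "0 < 1 - x" using x0 by simp
  have lnn: "0 \<le> ln (real n)" "ln (real n) \<le> real n" using n by (auto simp: ln_le_minus_one[of "real n"] intro: order.trans[OF ln_le_minus_one])
  have "(1 - x) ^ t = exp (real t * ln (1 - x))"
    using x1 by (simp only: exp_of_nat_mult exp_ln)
  also have "exp (real t * ln (1 - x)) \<ge> exp (real t * (- x - 2 * x\<^sup>2))"
    using ln_one_minus_pos_lower_bound[OF x0] by (intro exp_mono mult_left_mono) auto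
  finally have A: "exp (real t * (- x - 2 * x\<^sup>2)) \<le> (1 - x) ^ t" .
  have "real t * (x + 2 * x\<^sup>2) \<le> real n / 2 * ln (real n) * (x + 2 * x\<^sup>2)"
    using t x0 by (intro mult_right_mono) auto
  also have "\<dots> = ln (real n) / 2 + ln (real n) / real n"
    using n by (simp add: x_def power2_eq_square field_simps)
  also have "\<dots> \<le> ln (real n) / 2 + 1"
    using lnn n by (simp add: divide_le_eq)
  finally have B: "exp (- (ln (real n) / 2 + 1)) \<le> (1 - x) ^ t"
    using A by (smt (verit, ccfv_SIG) exp_le_cancel_iff mult_minus_right)
  have "exp (- (ln (real n) / 2 + 1)) = 1 / (sqrt (real n) * exp 1)"
  proof -
    have "exp (ln (real n) / 2) = sqrt (real n)"
      using n by (simp add: powr_half_sqrt[symmetric] powr_def)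
    moreover have "exp (- (ln (real n) / 2 + 1)) = 1 / (exp (ln (real n) / 2) * exp 1)"
      by (simp only: exp_add[symmetric] exp_minus[symmetric] inverse_eq_divide[symmetric])
    ultimately show ?thesis by simp
  qed
  with B have C: "1 / (sqrt (real n) * exp 1) \<le> (1 - x) ^ t" by simp
  have "sqrt (real n) / exp 1 = real n * (1 / (sqrt (real n) * exp 1))"
    using n by (simp add: field_simps real_sqrt_mult[symmetric] )
  also have "\<dots> \<le> real n * (1 - x) ^ t" using C by (intro mult_left_mono) auto
  finally have D: "sqrt (real n) / exp 1 \<le> real n * (1 - x) ^ t" .
  have y: "0 \<le> (1 - x) ^ t" "(1 - x) ^ t \<le> 1" using x0 by (auto intro: power_le_one)
  have "(1 - (1 - x) ^ t) ^ n \<le> exp (- real n * (1 - x) ^ t)"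
    using y by (intro pow_le_exp) auto
  also have "\<dots> \<le> exp (- sqrt (real n) / exp 1)" using D by simp
  finally show ?thesis unfolding x_def .
qed


locale sis =
  fixes n :: nat and E :: "nat set set" and a lam kap :: real
  assumes n1: "n \<ge> 1" and kap0: "0 < kap" and kap1: "kap \<le> 1"
    and a_ge: "1 - kap \<le> a" and lam0: "0 \<le> lam"
begin

abbreviation "S \<equiv> states n"
abbreviation "K \<equiv> sis_kernel n E a lam kap"
abbreviation "law \<equiv> sis_law n E a lam kap"
abbreviation "F \<equiv> {..<n}"
definition "q \<sigma> x = min 1 (a + lam * real (n_inf E \<sigma> x))"

lemma q_bounds: "0 \<le> q \<sigma> x" "q \<sigma> x \<le> 1" "1 - q \<sigma> x \<le> kap"
proof -
  have "0 \<le> lam * real (n_inf E \<sigma> x)" using lam0 by simp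
  then show "0 \<le> q \<sigma> x" "q \<sigma> x \<le> 1" "1 - q \<sigma> x \<le> kap"
    unfolding q_def using a_ge kap1 kap0 by auto
qed

lemma finS: "finite S" by (simp add: states_def)
lemma FS: "F \<in> S" by (simp add: states_def)
lemma emptyS: "{} \<in> S" by (simp add: states_def)

lemma site_sum:
  "finite A \<Longrightarrow> (\<Sum>\<tau>\<in>A. site_step E a lam kap x \<sigma> \<tau>) =
    (if x \<notin> \<sigma> then (if insert x \<sigma> \<in> A then q \<sigma> x else 0) + (if \<sigma> \<in> A then 1 - q \<sigma> x else 0)
     else (if \<sigma> - {x} \<in> A then kap else 0) + (if \<sigma> \<in> A then 1 - kap else 0))"
  unfolding q_def by (rule site_step_sum)

lemma site_nonneg: "0 \<le> site_step E a lam kap x \<sigma> \<tau>"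
  using q_bounds[of \<sigma> x] kap1 kap0 unfolding site_step_def q_def Let_def by auto

lemma site_total: "\<sigma> \<in> S \<Longrightarrow> x < n \<Longrightarrow> (\<Sum>\<tau>\<in>S. site_step E a lam kap x \<sigma> \<tau>) = 1"
  by (subst site_sum[OF finS]) (auto simp: states_def)

lemma K_nonneg: "0 \<le> K \<sigma> \<tau>"
  unfolding sis_kernel_def by (intro divide_nonneg_nonneg sum_nonneg site_nonneg) auto

lemma K_sum: "finite A \<Longrightarrow> (\<Sum>\<tau>\<in>A. K \<sigma> \<tau>) = (\<Sum>x<n. \<Sum>\<tau>\<in>A. site_step E a lam kap x \<sigma> \<tau>) / real n"
  unfolding sis_kernel_def by (simp add: sum_divide_distrib[symmetric] sum.swap[of _ A])

lemma K_total: "\<sigma> \<in> S \<Longrightarrow> (\<Sum>\<tau>\<in>S. K \<sigma> \<tau>) = 1"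
  using n1 by (simp add: K_sum finS site_total)

lemma law_Suc: "law \<sigma>0 (Suc t) \<tau> = (\<Sum>\<sigma>\<in>S. law \<sigma>0 t \<sigma> * K \<sigma> \<tau>)"
  by simp

lemma law_nonneg: "0 \<le> law \<sigma>0 t \<tau>"
  by (induction t arbitrary: \<tau>) (auto intro!: sum_nonneg mult_nonneg_nonneg K_nonneg)

lemma law_mass: "finite A \<Longrightarrow> (\<Sum>\<tau>\<in>A. law \<sigma>0 (Suc t) \<tau>) = (\<Sum>\<sigma>\<in>S. law \<sigma>0 t \<sigma> * (\<Sum>\<tau>\<in>A. K \<sigma> \<tau>))"
  by (simp add: sum_distrib_left sum.swap[of _ A])

lemma law_total: "\<sigma>0 \<in> S \<Longrightarrow> (\<Sum>\<tau>\<in>S. law \<sigma>0 t \<tau>) = 1"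
proof (induction t)
  case 0 then show ?case using finS by simp
next
  case (Suc t)
  have "(\<Sum>\<tau>\<in>S. law \<sigma>0 (Suc t) \<tau>) = (\<Sum>\<sigma>\<in>S. law \<sigma>0 t \<sigma> * 1)"
    by (subst law_mass[OF finS]) (simp add: K_total)
  then show ?case using Suc by simp
qed


lemma site_D_other:
  assumes "\<sigma> \<in> S" "y < n" "y \<noteq> x"
  shows "(\<Sum>\<tau>\<in>{\<tau>\<in>S. x \<notin> \<tau>}. site_step E a lam kap y \<sigma> \<tau>) = (if x \<notin> \<sigma> then 1 else 0)"
  using assms by (subst site_sum) (auto simp: states_def finS)

lemma site_D_self:
  assumes "\<sigma> \<in> S" "x < n"
  shows "(\<Sum>\<tau>\<in>{\<tau>\<in>S. x \<notin> \<tau>}. site_step E a lam kap x \<sigma> \<tau>) \<le> kap"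
  using assms q_bounds[of \<sigma> x] by (subst site_sum) (auto simp: states_def finS)

lemma K_D:
  assumes "\<sigma> \<in> S" "x < n"
  shows "(\<Sum>\<tau>\<in>{\<tau>\<in>S. x \<notin> \<tau>}. K \<sigma> \<tau>) \<le> (real (n - 1) * (if x \<notin> \<sigma> then 1 else 0) + kap) / real n"
proof -
  let ?g = "\<lambda>y. (\<Sum>\<tau>\<in>{\<tau>\<in>S. x \<notin> \<tau>}. site_step E a lam kap y \<sigma> \<tau>)"
  have "(\<Sum>y<n. ?g y) = ?g x + (\<Sum>y\<in>{..<n}-{x}. ?g y)"
    using assms by (simp add: sum.remove)
  also have "(\<Sum>y\<in>{..<n}-{x}. ?g y) = (\<Sum>y\<in>{..<n}-{x}. (if x \<notin> \<sigma> then 1 else 0))"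
    using assms by (intro sum.cong) (auto simp: site_D_other)
  also have "\<dots> = real (n - 1) * (if x \<notin> \<sigma> then 1 else 0)"
    using assms by simp
  finally have "(\<Sum>y<n. ?g y) \<le> real (n - 1) * (if x \<notin> \<sigma> then 1 else 0) + kap"
    using site_D_self[OF assms] by linarith
  then show ?thesis using n1 by (simp add: K_sum finS divide_right_mono)
qed

definition "D \<sigma>0 t x = (\<Sum>\<tau>\<in>{\<tau>\<in>S. x \<notin> \<tau>}. law \<sigma>0 t \<tau>)"

lemma D_bound:
  assumes "\<sigma>0 \<in> S" "x < n"
  shows "D \<sigma>0 t x \<le> (1 - 1 / real n) ^ t + kap"
proof (induction t)
  case 0
  have "D \<sigma>0 0 x \<le> (\<Sum>\<tau>\<in>S. law \<sigma>0 0 \<tau>)"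
    unfolding D_def by (rule sum_mono2) (auto simp: finS law_nonneg)
  then show ?case using law_total[OF assms(1), of 0] kap0 by simp
next
  case (Suc t)
  have "D \<sigma>0 (Suc t) x = (\<Sum>\<sigma>\<in>S. law \<sigma>0 t \<sigma> * (\<Sum>\<tau>\<in>{\<tau>\<in>S. x \<notin> \<tau>}. K \<sigma> \<tau>))"
    unfolding D_def by (rule law_mass) (simp add: finS)
  also have "\<dots> \<le> (\<Sum>\<sigma>\<in>S. law \<sigma>0 t \<sigma> * ((real (n - 1) * (if x \<notin> \<sigma> then 1 else 0) + kap) / real n))"
    by (intro sum_mono mult_left_mono K_D law_nonneg assms(2)) 
  also have "\<dots> = (real (n - 1) * (\<Sum>\<sigma>\<in>S. law \<sigma>0 t \<sigma> * (if x \<notin> \<sigma> then 1 else 0)) + kap * (\<Sum>\<sigma>\<in>S. law \<sigma>0 t \<sigma>)) / real n"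
    by (simp add: sum_divide_distrib[symmetric] sum_distrib_left sum.distrib algebra_simps)
  also have "(\<Sum>\<sigma>\<in>S. law \<sigma>0 t \<sigma> * (if x \<notin> \<sigma> then 1 else 0)) = D \<sigma>0 t x"
    unfolding D_def by (simp add: sum.inter_filter[symmetric] finS if_distrib cong: if_cong)
  also have "(\<Sum>\<sigma>\<in>S. law \<sigma>0 t \<sigma>) = 1" using law_total[OF assms(1)] .
  finally have 1: "D \<sigma>0 (Suc t) x \<le> (real (n - 1) * D \<sigma>0 t x + kap) / real n" by simp
  have "real (n - 1) * D \<sigma>0 t x \<le> real (n - 1) * ((1 - 1 / real n) ^ t + kap)"
    using Suc by (intro mult_left_mono) auto
  then have "D \<sigma>0 (Suc t) x \<le> (real (n - 1) * ((1 - 1 / real n) ^ t + kap) + kap) / real n"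
    using 1 n1 by (smt (verit) divide_right_mono of_nat_0_le_iff)
  also have "\<dots> = (1 - 1 / real n) ^ Suc t + kap"
    using n1 by (simp add: of_nat_diff field_simps)
  finally show ?case .
qed


lemma missF:
  assumes "\<sigma>0 \<in> S"
  shows "1 - law \<sigma>0 t F \<le> real n * ((1 - 1 / real n) ^ t + kap)"
proof -
  let ?c = "\<lambda>\<tau>. (\<Sum>x<n. if x \<notin> \<tau> then 1 else 0::real)"
  have "1 - law \<sigma>0 t F = (\<Sum>\<tau>\<in>S - {F}. law \<sigma>0 t \<tau>)"
    using law_total[OF assms, of t] by (simp add: sum_diff1 finS FS)
  also have "\<dots> \<le> (\<Sum>\<tau>\<in>S - {F}. law \<sigma>0 t \<tau> * ?c \<tau>)"
  proof (rule sum_mono)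
    fix \<tau> assume "\<tau> \<in> S - {F}"
    then obtain x where x: "x < n" "x \<notin> \<tau>" by (auto simp: states_def)
    have "1 \<le> ?c \<tau>"
    proof -
      have "(if x \<notin> \<tau> then 1 else 0::real) \<le> ?c \<tau>"
        by (rule member_le_sum[where f = "\<lambda>x. if x \<notin> \<tau> then 1 else 0::real"]) (use x in auto)
      then show ?thesis using x by simp
    qed
    then show "law \<sigma>0 t \<tau> \<le> law \<sigma>0 t \<tau> * ?c \<tau>"
      using law_nonneg[of \<sigma>0 t \<tau>] by (metis mult_left_mono mult.right_neutral)
  qed
  also have "\<dots> \<le> (\<Sum>\<tau>\<in>S. law \<sigma>0 t \<tau> * ?c \<tau>)"
    by (rule sum_mono2) (auto simp: finS law_nonneg sum_nonneg)
  also have "\<dots> = (\<Sum>x<n. D \<sigma>0 t x)"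
  proof -
    have "(\<Sum>\<tau>\<in>S. law \<sigma>0 t \<tau> * ?c \<tau>) = (\<Sum>\<tau>\<in>S. \<Sum>x<n. law \<sigma>0 t \<tau> * (if x \<notin> \<tau> then 1 else 0))"
      by (simp only: sum_distrib_left)
    also have "\<dots> = (\<Sum>x<n. \<Sum>\<tau>\<in>S. law \<sigma>0 t \<tau> * (if x \<notin> \<tau> then 1 else 0))"
      by (rule sum.swap)
    also have "\<dots> = (\<Sum>x<n. D \<sigma>0 t x)"
      unfolding D_def by (rule sum.cong[OF refl]) (simp add: sum.inter_filter finS, rule sum.cong, auto)
    finally show ?thesis .
  qed
  also have "\<dots> \<le> (\<Sum>x<n. (1 - 1 / real n) ^ t + kap)"
    by (intro sum_mono D_bound assms) auto
  also have "\<dots> = real n * ((1 - 1 / real n) ^ t + kap)" by simp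
  finally show ?thesis .
qed


lemma site_C_out:
  assumes "\<sigma> \<in> S" "y < n" "y \<notin> B"
  shows "(\<Sum>\<tau>\<in>{\<tau>\<in>S. B \<subseteq> \<tau>}. site_step E a lam kap y \<sigma> \<tau>) = (if B \<subseteq> \<sigma> then 1 else 0)"
  using assms by (subst site_sum) (auto simp: states_def finS)

lemma site_C_in:
  assumes "\<sigma> \<in> S" "y < n" "y \<in> B"
  shows "(\<Sum>\<tau>\<in>{\<tau>\<in>S. B \<subseteq> \<tau>}. site_step E a lam kap y \<sigma> \<tau>) \<le> (if B - {y} \<subseteq> \<sigma> then 1 else 0)"
  using assms q_bounds[of \<sigma> y] kap0 kap1 by (subst site_sum) (auto simp: states_def finS)

lemma K_C:
  assumes "\<sigma> \<in> S" "B \<subseteq> F"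
  shows "(\<Sum>\<tau>\<in>{\<tau>\<in>S. B \<subseteq> \<tau>}. K \<sigma> \<tau>) \<le>
     (real (n - card B) * (if B \<subseteq> \<sigma> then 1 else 0) + (\<Sum>y\<in>B. if B - {y} \<subseteq> \<sigma> then 1 else 0)) / real n"
proof -
  let ?g = "\<lambda>y. (\<Sum>\<tau>\<in>{\<tau>\<in>S. B \<subseteq> \<tau>}. site_step E a lam kap y \<sigma> \<tau>)"
  have fB: "finite B" using assms(2) finite_subset by blast
  have "(\<Sum>y<n. ?g y) = (\<Sum>y\<in>F - B. ?g y) + (\<Sum>y\<in>B. ?g y)"
    using assms fB by (simp add: sum.subset_diff)
  also have "(\<Sum>y\<in>F - B. ?g y) = (\<Sum>y\<in>F - B. (if B \<subseteq> \<sigma> then 1 else 0))"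
    using assms by (intro sum.cong) (auto simp: site_C_out)
  also have "\<dots> = real (n - card B) * (if B \<subseteq> \<sigma> then 1 else 0)"
    using assms fB by (simp add: card_Diff_subset)
  finally have "(\<Sum>y<n. ?g y) \<le> real (n - card B) * (if B \<subseteq> \<sigma> then 1 else 0) + (\<Sum>y\<in>B. if B - {y} \<subseteq> \<sigma> then 1 else 0)"
    using sum_mono[of B ?g "\<lambda>y. if B - {y} \<subseteq> \<sigma> then 1 else 0"] site_C_in[OF assms(1)] assms(2)
    by force
  then show ?thesis using n1 by (simp add: K_sum finS divide_right_mono)
qed

definition "Am t B = (\<Sum>\<tau>\<in>{\<tau>\<in>S. B \<subseteq> \<tau>}. law {} t \<tau>)"

lemma bernoulli_aux:
  fixes r h :: real
  assumes "0 \<le> r" "0 \<le> h"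
  shows "r ^ Suc k + real (Suc k) * r ^ k * h \<le> (r + h) ^ Suc k"
proof (induction k)
  case 0 then show ?case by simp
next
  case (Suc k)
  have "r ^ Suc (Suc k) + real (Suc (Suc k)) * r ^ Suc k * h
      \<le> (r + h) * (r ^ Suc k + real (Suc k) * r ^ k * h)"
    using assms by (simp add: algebra_simps mult_nonneg_nonneg)
  also have "\<dots> \<le> (r + h) * (r + h) ^ Suc k"
    using Suc assms by (intro mult_left_mono) auto
  finally show ?case by simp
qed

lemma Am_bound:
  assumes "B \<subseteq> F"
  shows "Am t B \<le> (1 - (1 - 1 / real n) ^ t) ^ card B"
  using assms
proof (induction t arbitrary: B)
  case 0
  have fB: "finite B" using 0 finite_subset by blast
  show ?case
  proof (cases "B = {}")
    case True
    have "Am 0 B \<le> (\<Sum>\<tau>\<in>S. law {} 0 \<tau>)"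
      unfolding Am_def by (rule sum_mono2) (auto simp: finS law_nonneg)
    then show ?thesis using True law_total[OF emptyS, of 0] by simp
  next
    case False
    have "Am 0 B = 0" unfolding Am_def using False by (intro sum.neutral) auto
    then show ?thesis using False fB by simp
  qed
next
  case (Suc t B)
  define r where "r = 1 - (1 - 1 / real n) ^ t"
  have b0: "0 \<le> 1 - 1 / real n" "1 - 1 / real n \<le> 1" using n1 by (auto simp: field_simps)
  have r0: "0 \<le> r" "r \<le> 1" unfolding r_def using power_le_one[OF b0, of t] zero_le_power[OF b0(1), of t]
    by auto
  have fB: "finite B" using Suc.prems finite_subset by blast
  have kn: "card B \<le> n" using Suc.prems card_mono[of F B] by auto
  have "Am (Suc t) B = (\<Sum>\<sigma>\<in>S. law {} t \<sigma> * (\<Sum>\<tau>\<in>{\<tau>\<in>S. B \<subseteq> \<tau>}. K \<sigma> \<tau>))"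
    unfolding Am_def by (rule law_mass) (simp add: finS)
  also have "\<dots> \<le> (\<Sum>\<sigma>\<in>S. law {} t \<sigma> * ((real (n - card B) * (if B \<subseteq> \<sigma> then 1 else 0) + (\<Sum>y\<in>B. if B - {y} \<subseteq> \<sigma> then 1 else 0)) / real n))"
    by (intro sum_mono mult_left_mono K_C law_nonneg Suc.prems)
  also have "\<dots> = (real (n - card B) * (\<Sum>\<sigma>\<in>S. law {} t \<sigma> * (if B \<subseteq> \<sigma> then 1 else 0)) + (\<Sum>y\<in>B. \<Sum>\<sigma>\<in>S. law {} t \<sigma> * (if B - {y} \<subseteq> \<sigma> then 1 else 0))) / real n"
    by (simp add: sum_divide_distrib[symmetric] sum_distrib_left sum.distrib algebra_simps sum.swap[of _ S B])
  also have "(\<Sum>\<sigma>\<in>S. law {} t \<sigma> * (if B \<subseteq> \<sigma> then 1 else 0)) = Am t B"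
    unfolding Am_def by (simp add: sum.inter_filter finS, rule sum.cong, auto)
  also have "(\<Sum>y\<in>B. \<Sum>\<sigma>\<in>S. law {} t \<sigma> * (if B - {y} \<subseteq> \<sigma> then 1 else 0)) = (\<Sum>y\<in>B. Am t (B - {y}))"
    unfolding Am_def by (rule sum.cong[OF refl]) (simp add: sum.inter_filter finS, rule sum.cong, auto)
  finally have 1: "Am (Suc t) B \<le> (real (n - card B) * Am t B + (\<Sum>y\<in>B. Am t (B - {y}))) / real n" .
  have 2: "real (n - card B) * Am t B \<le> real (n - card B) * r ^ card B"
    using Suc.IH[OF Suc.prems] unfolding r_def by (intro mult_left_mono) auto
  have 3: "(\<Sum>y\<in>B. Am t (B - {y})) \<le> (\<Sum>y\<in>B. r ^ (card B - 1))"
  proof (rule sum_mono)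
    fix y assume y: "y \<in> B"
    have "B - {y} \<subseteq> F" using Suc.prems by auto
    from Suc.IH[OF this] show "Am t (B - {y}) \<le> r ^ (card B - 1)"
      using y fB unfolding r_def by simp
  qed
  have 4: "Am (Suc t) B \<le> (real (n - card B) * r ^ card B + real (card B) * r ^ (card B - 1)) / real n"
  proof -
    have "(real (n - card B) * Am t B + (\<Sum>y\<in>B. Am t (B - {y}))) / real n \<le> (real (n - card B) * r ^ card B + real (card B) * r ^ (card B - 1)) / real n"
      using 2 3 by (intro divide_right_mono) auto
    then show ?thesis using 1 by linarith
  qed
  have eq: "1 - (1 - 1 / real n) ^ Suc t = r + (1 - r) / real n"
    unfolding r_def using n1 by (simp add: field_simps)
  show ?case
  proof (cases "card B")
    case 0
    then show ?thesis using 4 n1 by simp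
  next
    case (Suc k)
    have h0: "0 \<le> (1 - r) / real n" using r0 by simp
    have "(real (n - card B) * r ^ card B + real (card B) * r ^ (card B - 1)) / real n
        = r ^ Suc k + real (Suc k) * r ^ k * ((1 - r) / real n)"
      using Suc kn n1 by (simp add: of_nat_diff field_simps)
    also have "\<dots> \<le> (r + (1 - r) / real n) ^ Suc k"
      by (rule bernoulli_aux[OF r0(1) h0])
    finally show ?thesis using 4 Suc eq by simp
  qed
qed

lemma lawF_empty: "law {} t F \<le> (1 - (1 - 1 / real n) ^ t) ^ n"
proof -
  have "law {} t F \<le> Am t F"
    unfolding Am_def by (rule member_le_sum) (auto simp: FS law_nonneg finS)
  then show ?thesis using Am_bound[of F t] by simp
qed


lemma CK: "\<tau> \<in> S \<Longrightarrow> law \<sigma>0 (s + t) \<tau> = (\<Sum>\<rho>\<in>S. law \<sigma>0 s \<rho> * law \<rho> t \<tau>)"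
proof (induction t arbitrary: \<tau>)
  case 0
  have "(\<Sum>\<rho>\<in>S. law \<sigma>0 s \<rho> * law \<rho> 0 \<tau>) = (\<Sum>\<rho>\<in>S. if \<rho> = \<tau> then law \<sigma>0 s \<rho> else 0)"
    by (rule sum.cong) auto
  then show ?case using 0 finS by simp
next
  case (Suc t)
  have "law \<sigma>0 (s + Suc t) \<tau> = (\<Sum>\<sigma>\<in>S. law \<sigma>0 (s + t) \<sigma> * K \<sigma> \<tau>)" by simp
  also have "\<dots> = (\<Sum>\<sigma>\<in>S. (\<Sum>\<rho>\<in>S. law \<sigma>0 s \<rho> * law \<rho> t \<sigma>) * K \<sigma> \<tau>)"
    using Suc.IH by (intro sum.cong) auto
  also have "\<dots> = (\<Sum>\<rho>\<in>S. law \<sigma>0 s \<rho> * (\<Sum>\<sigma>\<in>S. law \<rho> t \<sigma> * K \<sigma> \<tau>))"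
  proof -
    have "(\<Sum>\<sigma>\<in>S. (\<Sum>\<rho>\<in>S. law \<sigma>0 s \<rho> * law \<rho> t \<sigma>) * K \<sigma> \<tau>) = (\<Sum>\<sigma>\<in>S. \<Sum>\<rho>\<in>S. law \<sigma>0 s \<rho> * (law \<rho> t \<sigma> * K \<sigma> \<tau>))"
      by (simp add: sum_distrib_right mult.assoc)
    also have "\<dots> = (\<Sum>\<rho>\<in>S. \<Sum>\<sigma>\<in>S. law \<sigma>0 s \<rho> * (law \<rho> t \<sigma> * K \<sigma> \<tau>))"
      by (rule sum.swap)
    finally show ?thesis by (simp add: sum_distrib_left)
  qed
  finally show ?case by simp
qed

definition "Lin d t \<tau> = (\<Sum>\<sigma>\<in>S. d \<sigma> * law \<sigma> t \<tau>)"

lemma Lin_0: "\<tau> \<in> S \<Longrightarrow> Lin d 0 \<tau> = d \<tau>"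
proof -
  assume "\<tau> \<in> S"
  have "Lin d 0 \<tau> = (\<Sum>\<sigma>\<in>S. if \<sigma> = \<tau> then d \<sigma> else 0)"
    unfolding Lin_def by (rule sum.cong) auto
  then show ?thesis using \<open>\<tau> \<in> S\<close> finS by simp
qed

lemma Lin_comp: "\<tau> \<in> S \<Longrightarrow> Lin d (s + t) \<tau> = Lin (Lin d s) t \<tau>"
proof -
  assume \<tau>: "\<tau> \<in> S"
  have "Lin (Lin d s) t \<tau> = (\<Sum>\<rho>\<in>S. \<Sum>\<sigma>\<in>S. d \<sigma> * (law \<sigma> s \<rho> * law \<rho> t \<tau>))"
    unfolding Lin_def by (simp add: sum_distrib_right mult.assoc)
  also have "\<dots> = (\<Sum>\<sigma>\<in>S. \<Sum>\<rho>\<in>S. d \<sigma> * (law \<sigma> s \<rho> * law \<rho> t \<tau>))"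
    by (rule sum.swap)
  also have "\<dots> = Lin d (s + t) \<tau>"
    unfolding Lin_def using \<tau> by (simp add: CK sum_distrib_left)
  finally show ?thesis by simp
qed

lemma Lin_total: "(\<Sum>\<tau>\<in>S. Lin d t \<tau>) = (\<Sum>\<sigma>\<in>S. d \<sigma>)"
  unfolding Lin_def
  by (simp add: sum.swap[of _ S] sum_distrib_left[symmetric] law_total)

lemma Lin_abs: "(\<Sum>\<tau>\<in>S. \<bar>Lin d t \<tau>\<bar>) \<le> (\<Sum>\<sigma>\<in>S. \<bar>d \<sigma>\<bar>)"
proof -
  have "(\<Sum>\<tau>\<in>S. \<bar>Lin d t \<tau>\<bar>) \<le> (\<Sum>\<tau>\<in>S. \<Sum>\<sigma>\<in>S. \<bar>d \<sigma>\<bar> * law \<sigma> t \<tau>)"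
    unfolding Lin_def
    by (intro sum_mono order.trans[OF sum_abs]) (simp add: abs_mult law_nonneg)
  also have "\<dots> = (\<Sum>\<sigma>\<in>S. \<bar>d \<sigma>\<bar>)"
    by (simp add: sum.swap[of _ S] sum_distrib_left[symmetric] law_total)
  finally show ?thesis .
qed

lemma Lin_doeblin:
  assumes c: "\<And>\<sigma>. \<sigma> \<in> S \<Longrightarrow> c \<le> law \<sigma> T F" and d0: "(\<Sum>\<sigma>\<in>S. d \<sigma>) = 0"
  shows "(\<Sum>\<tau>\<in>S. \<bar>Lin d T \<tau>\<bar>) \<le> (1 - c) * (\<Sum>\<sigma>\<in>S. \<bar>d \<sigma>\<bar>)"
proof -
  define w where "w \<sigma> \<tau> = law \<sigma> T \<tau> - (if \<tau> = F then c else 0)" for \<sigma> \<tau>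
  have w0: "\<sigma> \<in> S \<Longrightarrow> 0 \<le> w \<sigma> \<tau>" for \<sigma> \<tau> using c[of \<sigma>] law_nonneg[of \<sigma> T \<tau>] by (auto simp: w_def)
  have wsum: "\<sigma> \<in> S \<Longrightarrow> (\<Sum>\<tau>\<in>S. w \<sigma> \<tau>) = 1 - c" for \<sigma>
    unfolding w_def using law_total[of \<sigma> T] FS finS by (simp add: sum_subtractf)
  have L: "Lin d T \<tau> = (\<Sum>\<sigma>\<in>S. d \<sigma> * w \<sigma> \<tau>)" for \<tau>
  proof -
    have "(\<Sum>\<sigma>\<in>S. d \<sigma> * w \<sigma> \<tau>) = Lin d T \<tau> - (if \<tau> = F then c else 0) * (\<Sum>\<sigma>\<in>S. d \<sigma>)"
      unfolding w_def Lin_def by (simp add: algebra_simps sum_subtractf sum_distrib_left sum_distrib_right)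
    then show ?thesis using d0 by simp
  qed
  have "(\<Sum>\<tau>\<in>S. \<bar>Lin d T \<tau>\<bar>) \<le> (\<Sum>\<tau>\<in>S. \<Sum>\<sigma>\<in>S. \<bar>d \<sigma>\<bar> * w \<sigma> \<tau>)"
    unfolding L by (intro sum_mono order.trans[OF sum_abs]) (simp add: abs_mult w0)
  also have "\<dots> = (\<Sum>\<sigma>\<in>S. \<bar>d \<sigma>\<bar> * (1 - c))"
    by (simp add: sum.swap[of _ S] sum_distrib_left[symmetric] wsum)
  finally show ?thesis by (simp add: sum_distrib_right[symmetric] mult.commute)
qed


lemma sum_ind_F: "(\<Sum>\<sigma>\<in>S. if \<sigma> = F then 1 else (0::real)) = 1"
  using sum.delta[OF finS, of F "\<lambda>_. 1::real"] FS by simp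

lemma Lin_diff: "Lin (\<lambda>\<rho>. f \<rho> - g \<rho>) t \<tau> = Lin f t \<tau> - Lin g t \<tau>"
  unfolding Lin_def by (simp add: sum_subtractf left_diff_distrib)

lemma Lin_law: "\<tau> \<in> S \<Longrightarrow> law \<sigma>0 (m + t) \<tau> = Lin (law \<sigma>0 m) t \<tau>"
  unfolding Lin_def by (rule CK)

end

locale sis_doeblin = sis +
  fixes T :: nat and c :: real
  assumes T0: "0 < T" and c0: "0 < c" and c1: "c \<le> 1" and cT: "\<And>\<sigma>. \<sigma> \<in> S \<Longrightarrow> c \<le> law \<sigma> T F"
begin

lemma Lin_iter:
  assumes d0: "(\<Sum>\<sigma>\<in>S. d \<sigma>) = 0"
  shows "(\<Sum>\<tau>\<in>S. \<bar>Lin d (k * T + r) \<tau>\<bar>) \<le> (1 - c) ^ k * (\<Sum>\<sigma>\<in>S. \<bar>d \<sigma>\<bar>)"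
proof (induction k)
  case 0 then show ?case using Lin_abs by simp
next
  case (Suc k)
  have "(\<Sum>\<tau>\<in>S. \<bar>Lin d (Suc k * T + r) \<tau>\<bar>) = (\<Sum>\<tau>\<in>S. \<bar>Lin (Lin d (k * T + r)) T \<tau>\<bar>)"
  proof (rule sum.cong[OF refl])
    fix \<tau> assume "\<tau> \<in> S"
    have "Suc k * T + r = (k * T + r) + T" by simp
    then show "\<bar>Lin d (Suc k * T + r) \<tau>\<bar> = \<bar>Lin (Lin d (k * T + r)) T \<tau>\<bar>"
      using Lin_comp[OF \<open>\<tau> \<in> S\<close>, of d "k * T + r" T] by (simp add: add.commute add.left_commute)
  qed
  also have "\<dots> \<le> (1 - c) * (\<Sum>\<tau>\<in>S. \<bar>Lin d (k * T + r) \<tau>\<bar>)"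
  proof (rule Lin_doeblin[OF cT])
    have "(\<Sum>\<tau>\<in>S. Lin d (k * T + r) \<tau>) = (\<Sum>\<sigma>\<in>S. d \<sigma>)" by (rule Lin_total)
    then show "(\<Sum>\<tau>\<in>S. Lin d (k * T + r) \<tau>) = 0" using d0 by simp
  qed
  also have "\<dots> \<le> (1 - c) * ((1 - c) ^ k * (\<Sum>\<sigma>\<in>S. \<bar>d \<sigma>\<bar>))"
    using Suc c1 by (intro mult_left_mono) auto
  finally show ?case by simp
qed

lemma Lin_decay:
  assumes d0: "(\<Sum>\<sigma>\<in>S. d \<sigma>) = 0"
  shows "(\<Sum>\<tau>\<in>S. \<bar>Lin d t \<tau>\<bar>) \<le> (1 - c) ^ (t div T) * (\<Sum>\<sigma>\<in>S. \<bar>d \<sigma>\<bar>)"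
  using Lin_iter[OF d0, of "t div T" "t mod T"] by simp

lemma law_cauchy_bound:
  assumes "\<tau> \<in> S"
  shows "\<bar>law F (m + t) \<tau> - law F t \<tau>\<bar> \<le> 2 * (1 - c) ^ (t div T)"
proof -
  define e where "e \<rho> = law F m \<rho> - law F 0 \<rho>" for \<rho>
  have "law F (m + t) \<tau> - law F t \<tau> = Lin e t \<tau>"
    using Lin_law[OF assms, of F m t] Lin_law[OF assms, of F 0 t] unfolding e_def Lin_diff by simp
  also have "\<bar>\<dots>\<bar> \<le> (\<Sum>\<tau>\<in>S. \<bar>Lin e t \<tau>\<bar>)"
    by (rule member_le_sum[OF assms, where f = "\<lambda>\<tau>. \<bar>Lin e t \<tau>\<bar>"]) (auto simp: finS)
  also have "\<dots> \<le> (1 - c) ^ (t div T) * (\<Sum>\<sigma>\<in>S. \<bar>e \<sigma>\<bar>)"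
  proof (rule Lin_decay)
    have "(\<Sum>\<sigma>\<in>S. e \<sigma>) = (\<Sum>\<sigma>\<in>S. law F m \<sigma>) - (\<Sum>\<sigma>\<in>S. law F 0 \<sigma>)"
      unfolding e_def by (rule sum_subtractf)
    then show "(\<Sum>\<sigma>\<in>S. e \<sigma>) = 0" by (simp only: law_total[OF FS])
  qed
  also have "(\<Sum>\<sigma>\<in>S. \<bar>e \<sigma>\<bar>) \<le> 2"
  proof -
    have "(\<Sum>\<sigma>\<in>S. \<bar>e \<sigma>\<bar>) \<le> (\<Sum>\<sigma>\<in>S. law F m \<sigma> + law F 0 \<sigma>)"
      unfolding e_def by (intro sum_mono) (use law_nonneg in \<open>auto simp: abs_le_iff\<close>)
    also have "(\<Sum>\<sigma>\<in>S. law F m \<sigma> + law F 0 \<sigma>) = (\<Sum>\<sigma>\<in>S. law F m \<sigma>) + (\<Sum>\<sigma>\<in>S. law F 0 \<sigma>)" by (rule sum.distrib)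
    also have "\<dots> = 2" by (simp only: law_total[OF FS])
    finally show ?thesis .
  qed
  finally have X: "\<bar>law F (m + t) \<tau> - law F t \<tau>\<bar> \<le> (1 - c) ^ (t div T) * 2"
    using c1 by (simp add: mult_left_mono)
  then show ?thesis by (simp add: mult.commute)
qed

lemma law_convergent:
  assumes "\<tau> \<in> S"
  shows "convergent (\<lambda>t. law F t \<tau>)"
proof -
  have "Cauchy (\<lambda>t. law F t \<tau>)"
  proof (rule CauchyI)
    fix \<epsilon> :: real assume \<epsilon>: "0 < \<epsilon>"
    have "(\<lambda>k. (1 - c) ^ k) \<longlonglongrightarrow> 0"
      using c0 c1 by (intro LIMSEQ_realpow_zero) auto
    then obtain N where N: "\<bar>(1 - c) ^ N\<bar> < \<epsilon> / 2"
      using \<epsilon> unfolding lim_sequentially by (metis dist_real_def diff_zero half_gt_zero order_refl)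
    show "\<exists>M. \<forall>m\<ge>M. \<forall>n\<ge>M. norm (law F m \<tau> - law F n \<tau>) < \<epsilon>"
    proof (intro exI allI impI)
      fix m k assume m: "N * T \<le> m" and k: "N * T \<le> k"
      have key: "\<bar>law F (d + t) \<tau> - law F t \<tau>\<bar> < \<epsilon>" if "N * T \<le> t" for d t
      proof -
        have "N \<le> t div T" using div_le_mono[OF that, of T] T0 by simp
        then have "(1 - c) ^ (t div T) \<le> (1 - c) ^ N"
          using c0 c1 by (intro power_decreasing) auto
        then show ?thesis using law_cauchy_bound[OF assms, of d t] N by auto
      qed
      show "norm (law F m \<tau> - law F k \<tau>) < \<epsilon>"
      proof (cases "k \<le> m")
        case True
        then show ?thesis using key[OF k, of "m - k"] by simp
      next
        case False
        then show ?thesis using key[OF m, of "k - m"] by (simp add: abs_minus_commute)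
      qed
    qed
  qed
  then show ?thesis by (simp add: Cauchy_convergent_iff)
qed


definition "pst \<tau> = (if \<tau> \<in> S then lim (\<lambda>t. law F t \<tau>) else 0)"

lemma pst_lim: "\<tau> \<in> S \<Longrightarrow> (\<lambda>t. law F t \<tau>) \<longlonglongrightarrow> pst \<tau>"
  using law_convergent unfolding pst_def by (simp add: convergent_LIMSEQ_iff)

lemma stat_pst: "is_stationary n E a lam kap pst"
  unfolding is_stationary_def
proof (intro conjI ballI allI impI)
  fix \<sigma> assume "\<sigma> \<notin> S" then show "pst \<sigma> = 0" by (simp add: pst_def)
next
  fix \<sigma> assume "\<sigma> \<in> S"
  show "0 \<le> pst \<sigma>"
    by (rule LIMSEQ_le_const[OF pst_lim[OF \<open>\<sigma> \<in> S\<close>]]) (use law_nonneg in blast)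
next
  have "(\<lambda>t. \<Sum>\<tau>\<in>S. law F t \<tau>) \<longlonglongrightarrow> (\<Sum>\<tau>\<in>S. pst \<tau>)"
    by (intro tendsto_sum pst_lim)
  moreover have "(\<lambda>t. \<Sum>\<tau>\<in>S. law F t \<tau>) = (\<lambda>t. 1)" by (rule ext) (rule law_total[OF FS])
  ultimately have "(\<lambda>t. 1::real) \<longlonglongrightarrow> (\<Sum>\<tau>\<in>S. pst \<tau>)" by simp
  then show "(\<Sum>\<tau>\<in>S. pst \<tau>) = 1" using LIMSEQ_unique[OF _ tendsto_const] by metis
next
  fix \<tau> assume \<tau>: "\<tau> \<in> S"
  have "(\<lambda>t. law F (Suc t) \<tau>) \<longlonglongrightarrow> pst \<tau>"
    using pst_lim[OF \<tau>] by (rule LIMSEQ_Suc)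
  moreover have "(\<lambda>t. law F (Suc t) \<tau>) \<longlonglongrightarrow> (\<Sum>\<sigma>\<in>S. pst \<sigma> * K \<sigma> \<tau>)"
    unfolding law_Suc by (intro tendsto_sum tendsto_mult pst_lim tendsto_const)
  ultimately show "pst \<tau> = (\<Sum>\<sigma>\<in>S. pst \<sigma> * K \<sigma> \<tau>)" by (rule LIMSEQ_unique)
qed

end

context sis begin

lemma stat_inv:
  assumes st: "is_stationary n E a lam kap \<mu>"
  shows "\<tau> \<in> S \<Longrightarrow> Lin \<mu> t \<tau> = \<mu> \<tau>"
proof (induction t arbitrary: \<tau>)
  case 0 then show ?case by (rule Lin_0)
next
  case (Suc t)
  have "Lin \<mu> (Suc t) \<tau> = (\<Sum>\<sigma>\<in>S. \<Sum>\<rho>\<in>S. \<mu> \<sigma> * (law \<sigma> t \<rho> * K \<rho> \<tau>))"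
    unfolding Lin_def by (simp add: sum_distrib_left)
  also have "\<dots> = (\<Sum>\<rho>\<in>S. \<Sum>\<sigma>\<in>S. \<mu> \<sigma> * (law \<sigma> t \<rho> * K \<rho> \<tau>))"
    by (rule sum.swap)
  also have "\<dots> = (\<Sum>\<rho>\<in>S. Lin \<mu> t \<rho> * K \<rho> \<tau>)"
    unfolding Lin_def by (simp add: sum_distrib_right mult.assoc)
  also have "\<dots> = (\<Sum>\<rho>\<in>S. \<mu> \<rho> * K \<rho> \<tau>)"
    using Suc.IH by (intro sum.cong) auto
  also have "\<dots> = \<mu> \<tau>"
  proof -
    have "\<forall>\<tau>\<in>S. \<mu> \<tau> = (\<Sum>\<sigma>\<in>S. \<mu> \<sigma> * K \<sigma> \<tau>)" using st unfolding is_stationary_def by blast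
    then show ?thesis using Suc.prems by (metis (no_types, lifting))
  qed
  finally show ?case .
qed

end

context sis_doeblin begin

lemma stat_unique:
  assumes st: "is_stationary n E a lam kap \<mu>"
  shows "\<mu> = pst"
proof -
  define d where "d \<sigma> = \<mu> \<sigma> - pst \<sigma>" for \<sigma>
  have d0: "(\<Sum>\<sigma>\<in>S. d \<sigma>) = 0"
  proof -
    have "(\<Sum>\<sigma>\<in>S. \<mu> \<sigma>) = 1" "(\<Sum>\<sigma>\<in>S. pst \<sigma>) = 1"
      using st stat_pst unfolding is_stationary_def by blast+
    then show ?thesis unfolding d_def by (simp add: sum_subtractf)
  qed
  have "Lin d T \<tau> = d \<tau>" if "\<tau> \<in> S" for \<tau>
    unfolding d_def Lin_diff using stat_inv[OF st that] stat_inv[OF stat_pst that] by simp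
  then have "(\<Sum>\<tau>\<in>S. \<bar>d \<tau>\<bar>) \<le> (1 - c) * (\<Sum>\<sigma>\<in>S. \<bar>d \<sigma>\<bar>)"
    using Lin_doeblin[OF cT d0] by (metis (no_types, lifting) sum.cong)
  then have "(\<Sum>\<tau>\<in>S. \<bar>d \<tau>\<bar>) \<le> 0"
  proof -
    have "0 \<le> (\<Sum>\<tau>\<in>S. \<bar>d \<tau>\<bar>)" by (rule sum_nonneg) simp
    then show ?thesis using c0 \<open>(\<Sum>\<tau>\<in>S. \<bar>d \<tau>\<bar>) \<le> (1 - c) * (\<Sum>\<sigma>\<in>S. \<bar>d \<sigma>\<bar>)\<close>
      by (simp add: algebra_simps mult_le_0_iff)
  qed
  then have "\<forall>\<tau>\<in>S. \<bar>d \<tau>\<bar> = 0"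
  proof -
    have "(\<Sum>\<tau>\<in>S. \<bar>d \<tau>\<bar>) = 0" using \<open>(\<Sum>\<tau>\<in>S. \<bar>d \<tau>\<bar>) \<le> 0\<close> by (meson abs_ge_zero order_antisym sum_nonneg)
    then show ?thesis using sum_nonneg_eq_0_iff[OF finS, of "\<lambda>\<tau>. \<bar>d \<tau>\<bar>"] by simp
  qed
  then show ?thesis
  proof -
    have "\<mu> \<tau> = pst \<tau>" for \<tau>
    proof (cases "\<tau> \<in> S")
      case True then show ?thesis using \<open>\<forall>\<tau>\<in>S. \<bar>d \<tau>\<bar> = 0\<close> unfolding d_def by simp
    next
      case False then show ?thesis using st stat_pst unfolding is_stationary_def by simp
    qed
    then show ?thesis by blast
  qed
qed

lemma sis_stat_eq: "sis_stat n E a lam kap = pst"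
  unfolding sis_stat_def using stat_pst stat_unique by (rule the_equality)

end

locale sis2 = sis +
  assumes nk: "real n * kap < 1"
begin

abbreviation "stat \<equiv> sis_stat n E a lam kap"

lemma exists_T: "\<exists>T>0. real n * ((1 - 1 / real n) ^ T + kap) < 1"
proof -
  have b0: "0 \<le> 1 - 1 / real n" "1 - 1 / real n < 1" using n1 by (auto simp: field_simps)
  have "(\<lambda>T. (1 - 1 / real n) ^ T) \<longlonglongrightarrow> 0" using b0 by (rule LIMSEQ_realpow_zero)
  moreover have "0 < (1 - real n * kap) / real n" using nk n1 by simp
  ultimately have "\<forall>\<^sub>F T in sequentially. (1 - 1 / real n) ^ T < (1 - real n * kap) / real n"
    by (simp add: order_tendsto_iff)
  then obtain N where N: "\<And>T. T \<ge> N \<Longrightarrow> (1 - 1 / real n) ^ T < (1 - real n * kap) / real n"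
    unfolding eventually_sequentially by blast
  have "(1 - 1 / real n) ^ Suc N < (1 - real n * kap) / real n" using N[of "Suc N"] by linarith
  then have "real n * (1 - 1 / real n) ^ Suc N < 1 - real n * kap"
    using n1 by (simp add: field_simps)
  then show ?thesis by (intro exI[of _ "Suc N"]) (simp add: algebra_simps)
qed

lemma stat_ok: "is_stationary n E a lam kap stat"
proof -
  obtain T where T: "T > 0" "real n * ((1 - 1 / real n) ^ T + kap) < 1" using exists_T by blast
  define c where "c = 1 - real n * ((1 - 1 / real n) ^ T + kap)"
  have c0: "0 < c" using T by (simp add: c_def)
  have "0 \<le> (1 - 1 / real n) ^ T" using n1 by (simp add: field_simps)
  then have c1: "c \<le> 1" unfolding c_def using kap0 n1 by (simp add: mult_nonneg_nonneg)
  have cT: "\<And>\<sigma>. \<sigma> \<in> S \<Longrightarrow> c \<le> law \<sigma> T F" unfolding c_def using missF by (smt (verit))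
  interpret D: sis_doeblin n E a lam kap T c
    by unfold_locales (use T c0 c1 cT in auto)
  show ?thesis using D.sis_stat_eq D.stat_pst by simp
qed


lemma stat_nonneg: "0 \<le> stat \<tau>"
proof -
  have "\<forall>\<sigma>. \<sigma> \<notin> S \<longrightarrow> stat \<sigma> = 0" "\<forall>\<sigma>\<in>S. 0 \<le> stat \<sigma>"
    using stat_ok unfolding is_stationary_def by blast+
  then show ?thesis by (cases "\<tau> \<in> S") auto
qed

lemma stat_total: "(\<Sum>\<tau>\<in>S. stat \<tau>) = 1"
  using stat_ok unfolding is_stationary_def by blast

lemma tv_split:
  assumes "(\<Sum>\<tau>\<in>S. \<nu> \<tau>) = 1" "(\<Sum>\<tau>\<in>S. \<mu> \<tau>) = 1"
  shows "tv_dist n \<nu> \<mu> = (\<bar>\<nu> F - \<mu> F\<bar> + (\<Sum>\<tau>\<in>S - {F}. \<bar>\<nu> \<tau> - \<mu> \<tau>\<bar>)) / 2"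
    "(\<Sum>\<tau>\<in>S - {F}. \<nu> \<tau>) = 1 - \<nu> F" "(\<Sum>\<tau>\<in>S - {F}. \<mu> \<tau>) = 1 - \<mu> F"
proof -
  show "tv_dist n \<nu> \<mu> = (\<bar>\<nu> F - \<mu> F\<bar> + (\<Sum>\<tau>\<in>S - {F}. \<bar>\<nu> \<tau> - \<mu> \<tau>\<bar>)) / 2"
    unfolding tv_dist_def by (subst sum.remove[OF finS FS]) (rule refl)
  show "(\<Sum>\<tau>\<in>S - {F}. \<nu> \<tau>) = 1 - \<nu> F"
    using sum.remove[OF finS FS, of \<nu>] assms(1) by linarith
  show "(\<Sum>\<tau>\<in>S - {F}. \<mu> \<tau>) = 1 - \<mu> F"
    using sum.remove[OF finS FS, of \<mu>] assms(2) by linarith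
qed

lemma tv_upper:
  assumes "\<And>\<tau>. 0 \<le> \<nu> \<tau>" "\<And>\<tau>. 0 \<le> \<mu> \<tau>" "(\<Sum>\<tau>\<in>S. \<nu> \<tau>) = 1" "(\<Sum>\<tau>\<in>S. \<mu> \<tau>) = 1"
  shows "tv_dist n \<nu> \<mu> \<le> max (1 - \<nu> F) (1 - \<mu> F)"
proof -
  have "(\<Sum>\<tau>\<in>S - {F}. \<bar>\<nu> \<tau> - \<mu> \<tau>\<bar>) \<le> (\<Sum>\<tau>\<in>S - {F}. \<nu> \<tau> + \<mu> \<tau>)"
    using assms(1,2) by (intro sum_mono) (simp add: abs_le_iff add_increasing add_increasing2)
  also have "\<dots> = (1 - \<nu> F) + (1 - \<mu> F)" using tv_split[OF assms(3,4)] by (simp add: sum.distrib)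
  finally show ?thesis using tv_split(1)[OF assms(3,4)] by (simp add: max_def abs_if split: if_splits)
qed

lemma tv_lower:
  assumes "(\<Sum>\<tau>\<in>S. \<nu> \<tau>) = 1" "(\<Sum>\<tau>\<in>S. \<mu> \<tau>) = 1"
  shows "\<mu> F - \<nu> F \<le> tv_dist n \<nu> \<mu>"
proof -
  have "\<bar>(\<Sum>\<tau>\<in>S - {F}. \<nu> \<tau> - \<mu> \<tau>)\<bar> \<le> (\<Sum>\<tau>\<in>S - {F}. \<bar>\<nu> \<tau> - \<mu> \<tau>\<bar>)"
    by (rule sum_abs)
  moreover have "(\<Sum>\<tau>\<in>S - {F}. \<nu> \<tau> - \<mu> \<tau>) = (1 - \<nu> F) - (1 - \<mu> F)"
    using tv_split[OF assms] by (simp add: sum_subtractf)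
  ultimately show ?thesis using tv_split(1)[OF assms] by (simp add: abs_if split: if_splits)
qed

lemma statF: "1 - real n * ((1 - 1 / real n) ^ t + kap) \<le> stat F"
proof -
  have "stat F = Lin stat t F" using stat_inv[OF stat_ok FS] by simp
  also have "Lin stat t F = (\<Sum>\<sigma>\<in>S. stat \<sigma> * law \<sigma> t F)" by (simp add: Lin_def)
  also have "\<dots> \<ge> (\<Sum>\<sigma>\<in>S. stat \<sigma> * (1 - real n * ((1 - 1 / real n) ^ t + kap)))"
    using missF by (intro sum_mono mult_left_mono stat_nonneg) (smt (verit))
  also have "(\<Sum>\<sigma>\<in>S. stat \<sigma> * (1 - real n * ((1 - 1 / real n) ^ t + kap))) = 1 - real n * ((1 - 1 / real n) ^ t + kap)"
    by (simp add: sum_distrib_right[symmetric] stat_total)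
  finally show ?thesis .
qed

lemma d_upper: "sis_d n E a lam kap t \<le> real n * ((1 - 1 / real n) ^ t + kap)"
  unfolding sis_d_def
proof (subst Max_le_iff)
  show "finite ((\<lambda>\<eta>0. tv_dist n (law \<eta>0 t) stat) ` S)" using finS by simp
  show "(\<lambda>\<eta>0. tv_dist n (law \<eta>0 t) stat) ` S \<noteq> {}" using FS by auto
  show "\<forall>x\<in>(\<lambda>\<eta>0. tv_dist n (law \<eta>0 t) stat) ` S. x \<le> real n * ((1 - 1 / real n) ^ t + kap)"
  proof
    fix x assume "x \<in> (\<lambda>\<eta>0. tv_dist n (law \<eta>0 t) stat) ` S"
    then obtain \<sigma> where \<sigma>: "\<sigma> \<in> S" and x: "x = tv_dist n (law \<sigma> t) stat" by blast
    have "x \<le> max (1 - law \<sigma> t F) (1 - stat F)"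
      unfolding x by (rule tv_upper) (auto simp: law_nonneg stat_nonneg law_total[OF \<sigma>] stat_total)
    then show "x \<le> real n * ((1 - 1 / real n) ^ t + kap)" using missF[OF \<sigma>, of t] statF[of t] by linarith
  qed
qed

lemma d_lower: "stat F - law {} t F \<le> sis_d n E a lam kap t"
proof -
  have "stat F - law {} t F \<le> tv_dist n (law {} t) stat"
    by (rule tv_lower) (auto simp: law_total[OF emptyS] stat_total)
  also have "\<dots> \<le> sis_d n E a lam kap t"
    unfolding sis_d_def by (rule Max_ge) (use finS emptyS in auto)
  finally show ?thesis .
qed

lemma tmix_bounds:
  assumes n3: "n \<ge> 3" and e0: "0 < \<epsilon>"
    and eU: "1 / real n + real n * kap \<le> \<epsilon>"
    and eL: "1 / real n + real n * kap + exp (- sqrt (real n) / exp 1) < 1 - \<epsilon>"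
  shows "real n / 2 * ln (real n) * (1 - 1 / real n) \<le> real (sis_tmix n E a lam kap \<epsilon>) \<and>
         real (sis_tmix n E a lam kap \<epsilon>) \<le> 2 * real n * ln (real n) * (1 + 1 / real n)"
proof -
  define t0 where "t0 = nat \<lceil>2 * real n * ln (real n)\<rceil>"
  have lnn: "1 \<le> ln (real n)"
  proof -
    have "exp 1 \<le> (3::real)" using exp_le by simp
    also have "\<dots> \<le> real n" using n3 by simp
    finally show ?thesis using n3 by (simp add: ln_ge_iff)
  qed
  have nn: "0 \<le> 2 * real n * ln (real n)" using lnn by simp
  have t0r: "real t0 = of_int \<lceil>2 * real n * ln (real n)\<rceil>" unfolding t0_def using nn by simp
  have t0a: "2 * real n * ln (real n) \<le> real t0" unfolding t0r using ceiling_correct by blast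
  have t0b: "real t0 \<le> 2 * real n * ln (real n) + 1" unfolding t0r using ceiling_correct[of "2 * real n * ln (real n)"] by linarith
  have dU: "sis_d n E a lam kap t0 \<le> \<epsilon>"
    using d_upper[of t0] upper_analytic[OF n3 t0a] eU by (simp add: algebra_simps)
  have tm_le: "sis_tmix n E a lam kap \<epsilon> \<le> t0"
    unfolding sis_tmix_def by (rule Least_le) (rule dU)
  have tm_ok: "sis_d n E a lam kap (sis_tmix n E a lam kap \<epsilon>) \<le> \<epsilon>"
    unfolding sis_tmix_def by (rule LeastI) (rule dU)
  have up: "real (sis_tmix n E a lam kap \<epsilon>) \<le> 2 * real n * ln (real n) * (1 + 1 / real n)"
  proof -
    have "real (sis_tmix n E a lam kap \<epsilon>) \<le> 2 * real n * ln (real n) + 1" using tm_le t0b by linarith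
    also have "\<dots> \<le> 2 * real n * ln (real n) * (1 + 1 / real n)"
      using lnn n3 by (simp add: algebra_simps)
    finally show ?thesis .
  qed
  have low: "real n / 2 * ln (real n) * (1 - 1 / real n) \<le> real (sis_tmix n E a lam kap \<epsilon>)"
  proof (rule ccontr)
    let ?t = "sis_tmix n E a lam kap \<epsilon>"
    assume "\<not> ?thesis"
    then have "real ?t < real n / 2 * ln (real n) * (1 - 1 / real n)" by simp
    also have "\<dots> \<le> real n / 2 * ln (real n)" using lnn n3 by (simp add: mult_left_le)
    finally have tt: "real ?t \<le> real n / 2 * ln (real n)" by simp
    have "law {} ?t F \<le> exp (- sqrt (real n) / exp 1)"
      using lawF_empty[of ?t] lower_analytic[OF n3 tt] by linarith
    moreover have "1 - 1 / real n - real n * kap \<le> stat F"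
      using statF[of t0] upper_analytic[OF n3 t0a] by (simp add: algebra_simps)
    ultimately have "\<epsilon> < sis_d n E a lam kap ?t" using d_lower[of ?t] eL by linarith
    then show False using tm_ok by linarith
  qed
  show ?thesis using low up by blast
qed

end



lemma f_bound:
  assumes n: "n \<ge> (2::nat)"
  shows "1 / real n + real n / (4 * (real n - 1)^2) + exp (- sqrt (real n) / exp 1) \<le> (2 + exp 1) / sqrt (real n)"
proof -
  have s1: "1 \<le> sqrt (real n)" using n by simp
  have sq: "sqrt (real n) * sqrt (real n) = real n" by simp
  have A: "real n / (4 * (real n - 1)^2) \<le> 1 / real n"
  proof -
    have "real n * real n \<le> 4 * (real n - 1)^2"   proof -
      have x2: "2 \<le> real n" using n by simp
      have "0 \<le> (3 * real n - 2) * (real n - 2)" using x2 by (intro mult_nonneg_nonneg) auto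
      moreover have "4 * (real n - 1)^2 - real n * real n = (3 * real n - 2) * (real n - 2)"
        by (simp add: power2_eq_square algebra_simps)
      ultimately show ?thesis by linarith
    qed
    moreover have "0 < 4 * (real n - 1)^2" using n by simp
    ultimately show ?thesis using n by (simp add: field_simps)
  qed
  have B: "1 / real n \<le> 1 / sqrt (real n)"
  proof -
    have "sqrt (real n) * 1 \<le> sqrt (real n) * sqrt (real n)" using s1 by (intro mult_left_mono) auto
    then have "sqrt (real n) \<le> real n" using sq by simp
    then show ?thesis using s1 by (intro divide_left_mono) auto
  qed
  have C: "exp (- sqrt (real n) / exp 1) \<le> exp 1 / sqrt (real n)"
  proof -
    define y where "y = sqrt (real n) / exp 1"
    have y0: "0 < y" using s1 by (simp add: y_def)
    have "1 + y \<le> exp y" by (rule exp_ge_add_one_self)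
    then have "y \<le> exp y" by linarith
    then have "exp (- y) \<le> 1 / y" using y0 by (simp add: exp_minus field_simps)
    then show ?thesis unfolding y_def by simp
  qed
  have "1 / real n + real n / (4 * (real n - 1)^2) + exp (- sqrt (real n) / exp 1) \<le> 2 / sqrt (real n) + exp 1 / sqrt (real n)"
    using A B C by simp
  also have "\<dots> = (2 + exp 1) / sqrt (real n)" by (simp add: add_divide_distrib)
  finally show ?thesis .
qed

lemma f_small:
  assumes m: "0 < (m::real)"
  shows "\<forall>\<^sub>F n in sequentially. 1 / real n + real n / (4 * (real n - 1)^2) + exp (- sqrt (real n) / exp 1) < m"
proof -
  obtain N :: nat where N: "((2 + exp 1) / m)^2 < real N" using reals_Archimedean2 by blast
  show ?thesis unfolding eventually_sequentially
  proof (intro exI[of _ "N + 2"] allI impI)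
    fix n assume nN: "N + 2 \<le> n"
    then have "((2 + exp 1) / m)^2 < real n" using N by linarith
    then have "(2 + exp 1) / m < sqrt (real n)" by (rule real_less_rsqrt)
    then have "(2 + exp 1) / sqrt (real n) < m" using m nN
    proof -
      assume h: "(2 + exp 1) / m < sqrt (real n)"
      have sp: "0 < sqrt (real n)" using nN by simp
      from h m have "2 + exp 1 < m * sqrt (real n)" by (simp add: pos_divide_less_eq mult.commute)
      then show ?thesis using sp by (simp add: pos_divide_less_eq)
    qed
    then show "1 / real n + real n / (4 * (real n - 1)^2) + exp (- sqrt (real n) / exp 1) < m"
      using f_bound[of n] nN by linarith
  qed
qed

lemma gnp_all:
  assumes "\<And>E. P E"
  shows "gnp_prob n p P = 1"
proof -
  have fin: "finite (all_pairs n)"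
    by (rule finite_subset[of _ "Pow {..<n}"]) (auto simp: all_pairs_def)
  have "gnp_prob n p P = (\<Sum>E\<in>Pow (all_pairs n). (\<Prod>x\<in>E. p) * (\<Prod>x\<in>all_pairs n - E. 1 - p))"
    unfolding gnp_prob_def using assms
  proof (intro sum.cong)
    fix E assume "E \<in> Pow (all_pairs n)"
    then have "E \<subseteq> all_pairs n" by auto
    then have "card (all_pairs n - E) = card (all_pairs n) - card E"
      using fin by (simp add: card_Diff_subset finite_subset)
    then show "p ^ card E * (1 - p) ^ (card (all_pairs n) - card E) = (\<Prod>x\<in>E. p) * (\<Prod>x\<in>all_pairs n - E. 1 - p)"
      by simp
  qed auto
  also have "\<dots> = (\<Prod>x\<in>all_pairs n. p + (1 - p))"
    by (rule prod_add[OF fin, symmetric])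
  finally show ?thesis by simp
qed


lemma per_n:
  assumes n3: "n \<ge> (3::nat)" and e: "0 < \<epsilon>" "\<epsilon> < 1"
    and reg: "0 < kap \<and> kap < 1 / (4 * (real n - 1)^2) \<and>
          a > 1 - 1 / real n powr \<alpha> \<and>
          1 - 1 / real n powr \<alpha> > 1 - kap \<and> 1 - kap > 1/2 \<and>
          0 < lam \<and> lam \<le> 1 / (real n powr (1 + \<alpha>) * pp)"
    and f: "1 / real n + real n / (4 * (real n - 1)^2) + exp (- sqrt (real n) / exp 1) < min \<epsilon> (1 - \<epsilon>)"
  shows "real n / 2 * ln (real n) * (1 - 1 / real n) \<le> real (sis_tmix n E a lam kap \<epsilon>) \<and>
         real (sis_tmix n E a lam kap \<epsilon>) \<le> 2 * real n * ln (real n) * (1 + 1 / real n)"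
proof -
  have nkb: "real n * kap < real n / (4 * (real n - 1)^2)"
    using reg n3 by (simp add: mult_strict_left_mono[of kap "1 / (4 * (real n - 1)^2)" "real n", simplified])
  have ex: "0 < exp (- sqrt (real n) / exp 1)" by simp
  have f2: "1 / real n + real n / (4 * (real n - 1)^2) + exp (- sqrt (real n) / exp 1) < \<epsilon>"
    "1 / real n + real n / (4 * (real n - 1)^2) + exp (- sqrt (real n) / exp 1) < 1 - \<epsilon>"
    using f by auto
  have i0: "0 \<le> 1 / real n" by simp
  have nk1: "real n * kap < 1" using nkb f2 i0 ex e by linarith
  interpret sis2 n E a lam kap
    by unfold_locales (use reg n3 nk1 in \<open>auto\<close>)
  show ?thesis
    by (rule tmix_bounds) (use n3 e nkb f2 ex i0 in \<open>auto, linarith\<close>)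
qed

theorem mainTheorem5:
  fixes p a lam kap :: "nat \<Rightarrow> real" and \<alpha> :: real
  assumes alpha: "\<alpha> > 1"
    and p_range: "\<forall>n. 0 < p n \<and> p n \<le> 1"
    and np: "filterlim (\<lambda>n. real n * p n) at_top sequentially"
    and regime: "\<forall>\<^sub>F n in sequentially.
          0 < kap n \<and> kap n < 1 / (4 * (real n - 1)^2) \<and>
          a n > 1 - 1 / real n powr \<alpha> \<and>
          1 - 1 / real n powr \<alpha> > 1 - kap n \<and> 1 - kap n > 1/2 \<and>
          0 < lam n \<and> lam n \<le> 1 / (real n powr (1 + \<alpha>) * p n)"
  shows "\<forall>\<epsilon>. 0 < \<epsilon> \<and> \<epsilon> < 1 \<longrightarrow>
    (\<exists>\<delta> :: nat \<Rightarrow> real. \<delta> \<longlonglongrightarrow> 0 \<and>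
      (\<forall>\<epsilon>' > 0. \<forall>\<^sub>F n in sequentially.
         gnp_prob n (p n) (\<lambda>E.
            real n / 2 * ln (real n) * (1 - \<delta> n) \<le> real (sis_tmix n E (a n) (lam n) (kap n) \<epsilon>) \<and>
            real (sis_tmix n E (a n) (lam n) (kap n) \<epsilon>) \<le> 2 * real n * ln (real n) * (1 + \<delta> n))
         \<ge> 1 - \<epsilon>'))"
proof (intro allI impI)
  fix \<epsilon> :: real assume e: "0 < \<epsilon> \<and> \<epsilon> < 1"
  show "\<exists>\<delta> :: nat \<Rightarrow> real. \<delta> \<longlonglongrightarrow> 0 \<and>
      (\<forall>\<epsilon>' > 0. \<forall>\<^sub>F n in sequentially.
         gnp_prob n (p n) (\<lambda>E.
            real n / 2 * ln (real n) * (1 - \<delta> n) \<le> real (sis_tmix n E (a n) (lam n) (kap n) \<epsilon>) \<and>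
            real (sis_tmix n E (a n) (lam n) (kap n) \<epsilon>) \<le> 2 * real n * ln (real n) * (1 + \<delta> n))
         \<ge> 1 - \<epsilon>')"
  proof (intro exI[of _ "\<lambda>n. 1 / real n"] conjI allI impI)
    show "(\<lambda>n. 1 / real n) \<longlonglongrightarrow> 0" by (rule lim_inverse_n')
    fix \<epsilon>' :: real assume "0 < \<epsilon>'"
    have m: "0 < min \<epsilon> (1 - \<epsilon>)" using e by simp
    have ev: "\<forall>\<^sub>F n in sequentially. n \<ge> 3" by (rule eventually_ge_at_top)
    show "\<forall>\<^sub>F n in sequentially.
         gnp_prob n (p n) (\<lambda>E.
            real n / 2 * ln (real n) * (1 - 1 / real n) \<le> real (sis_tmix n E (a n) (lam n) (kap n) \<epsilon>) \<and>
            real (sis_tmix n E (a n) (lam n) (kap n) \<epsilon>) \<le> 2 * real n * ln (real n) * (1 + 1 / real n))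
         \<ge> 1 - \<epsilon>'"
      using eventually_conj[OF regime eventually_conj[OF ev f_small[OF m]]]
    proof (rule eventually_mono)
      fix n assume H: "(0 < kap n \<and> kap n < 1 / (4 * (real n - 1)^2) \<and>
          a n > 1 - 1 / real n powr \<alpha> \<and>
          1 - 1 / real n powr \<alpha> > 1 - kap n \<and> 1 - kap n > 1/2 \<and>
          0 < lam n \<and> lam n \<le> 1 / (real n powr (1 + \<alpha>) * p n)) \<and>
          3 \<le> n \<and> 1 / real n + real n / (4 * (real n - 1)^2) + exp (- sqrt (real n) / exp 1) < min \<epsilon> (1 - \<epsilon>)"
      have "gnp_prob n (p n) (\<lambda>E.
            real n / 2 * ln (real n) * (1 - 1 / real n) \<le> real (sis_tmix n E (a n) (lam n) (kap n) \<epsilon>) \<and>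
            real (sis_tmix n E (a n) (lam n) (kap n) \<epsilon>) \<le> 2 * real n * ln (real n) * (1 + 1 / real n)) = 1"
        by (rule gnp_all, rule per_n) (use H e in auto)
      then show "gnp_prob n (p n) (\<lambda>E.
            real n / 2 * ln (real n) * (1 - 1 / real n) \<le> real (sis_tmix n E (a n) (lam n) (kap n) \<epsilon>) \<and>
            real (sis_tmix n E (a n) (lam n) (kap n) \<epsilon>) \<le> 2 * real n * ln (real n) * (1 + 1 / real n))
         \<ge> 1 - \<epsilon>'" using \<open>0 < \<epsilon>'\<close> by simp
    qed
  qed
qed


end
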